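(* Let $(W_{i,t})_{i,t\in\mathbb{Z}}$ be i.i.d. real-valued with law $\lambda$ whose support contains $0$. Let $Y_{\cdot,0}=(Y_{i,0})_{i\in\mathbb{Z}}\sim\mu$ independent of the weights and $Y_{\cdot,t+1}=\mathcal A(Y_{\cdot,t},W_{\cdot,t})$. Suppose $\mu$ is invariant ($Y_{\cdot,t}\sim\mu$ for all $t$), $\mathbb{E}|Y_{0,0}|<\infty$, and the array $\{(Y_{i,t},W_{i,t})\}_{i,t}$ is stationary and ergodic under shifts in $i$ and in $t$. Then either $Y_{0,0}\ge0$ a.s. or $Y_{0,0}\le0$ a.s.
   Context: Signed store update for the SJR model: for $Y\in\mathbb{R}^{\mathbb{Z}}$ and $W\in\mathbb{R}^{\mathbb{Z}}$ (with $x^+=\max(x,0)$, $x^-=\max(-x,0)$), $$\mathcal A(Y,W)_i=(Y_i^+-W_i^+)^+-(Y_i^-\wedge W_i^-)+(Y_{i-1}^+\wedge W_{i-1}^+)-(Y_{i-1}^--W_{i-1}^-)^+.$$ *)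

theory Defs
  imports "HOL-Probability.Probability"
begin

definition pos_part :: "real \<Rightarrow> real" where "pos_part x = max x 0"
definition neg_part :: "real \<Rightarrow> real" where "neg_part x = max (- x) 0"

definition sjr_update :: "(int \<Rightarrow> real) \<Rightarrow> (int \<Rightarrow> real) \<Rightarrow> int \<Rightarrow> real" where
  "sjr_update Y W i =
     pos_part (pos_part (Y i) - pos_part (W i))
     - min (neg_part (Y i)) (neg_part (W i))
     + min (pos_part (Y (i - 1))) (pos_part (W (i - 1)))
     - pos_part (neg_part (Y (i - 1)) - neg_part (W (i - 1)))"

definition measure_support :: "'b::topological_space measure \<Rightarrow> 'b set" where
  "measure_support N = {x. \<forall>U. open U \<longrightarrow> x \<in> U \<longrightarrow> 0 < emeasure N U}"

definition stationary_ergodic :: "'b measure \<Rightarrow> ('b \<Rightarrow> 'b) \<Rightarrow> bool" where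
  "stationary_ergodic P T \<longleftrightarrow>
     T \<in> P \<rightarrow>\<^sub>M P \<and> distr P P T = P \<and>
     (\<forall>A\<in>sets P. T -` A \<inter> space P = A \<longrightarrow> emeasure P A = 0 \<or> emeasure P A = 1)"

definition shift_i :: "(int \<times> nat \<Rightarrow> 'c) \<Rightarrow> (int \<times> nat \<Rightarrow> 'c)" where
  "shift_i f = (\<lambda>(i, t). f (i + 1, t))"
definition shift_t :: "(int \<times> nat \<Rightarrow> 'c) \<Rightarrow> (int \<times> nat \<Rightarrow> 'c)" where
  "shift_t f = (\<lambda>(i, t). f (i, Suc t))"

end

theory Submission
  imports Defs
begin

definition st :: "real \<times> real \<Rightarrow> real" where
  "st p = pos_part (pos_part (fst p) - pos_part (snd p)) - min (neg_part (fst p)) (neg_part (snd p))"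
definition mv :: "real \<times> real \<Rightarrow> real" where
  "mv p = min (pos_part (fst p)) (pos_part (snd p)) - pos_part (neg_part (fst p) - neg_part (snd p))"

lemma sjr_split: "sjr_update Y W i = st (Y i, W i) + mv (Y (i-1), W (i-1))"
  unfolding sjr_update_def st_def mv_def by simp

lemma st_mv_abs: "\<bar>st p\<bar> + \<bar>mv p\<bar> = \<bar>fst p\<bar>"
  unfolding st_def mv_def pos_part_def neg_part_def by (auto simp: min_def max_def)

lemma st_bound: "\<bar>st p\<bar> \<le> \<bar>fst p\<bar>" "\<bar>mv p\<bar> \<le> \<bar>fst p\<bar>"
  using st_mv_abs[of p] by auto

lemma st_zero: "st (0, w) = 0" "mv (0, w) = 0"
  unfolding st_def mv_def pos_part_def neg_part_def by auto

lemma mv_neg: "y \<le> - b \<Longrightarrow> \<bar>w\<bar> < e \<Longrightarrow> e \<le> b \<Longrightarrow> mv (y, w) \<le> - (b - e)"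
  unfolding st_def mv_def pos_part_def neg_part_def by (auto simp: min_def max_def)

lemma st_pos: "y \<ge> b \<Longrightarrow> \<bar>w\<bar> < e \<Longrightarrow> e \<le> b \<Longrightarrow> st (y, w) \<ge> b - e"
  unfolding st_def mv_def pos_part_def neg_part_def by (auto simp: min_def max_def)

lemma st_measurable[measurable]: "st \<in> borel_measurable borel" "mv \<in> borel_measurable borel"
  unfolding st_def mv_def pos_part_def neg_part_def
  by (intro borel_measurable_continuous_onI continuous_intros)+

lemma nearest_pair:
  fixes y :: "int \<Rightarrow> real"
  shows "j < k \<Longrightarrow> y j < 0 \<Longrightarrow> y k > 0 \<Longrightarrow>
    \<exists>j' k'. j \<le> j' \<and> j' < k' \<and> k' \<le> k \<and> y j' < 0 \<and> y k' > 0 \<and> (\<forall>i. j' < i \<and> i < k' \<longrightarrow> y i = 0)"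
proof (induction "nat (k - j)" arbitrary: j k rule: less_induct)
  case less
  show ?case
  proof (cases "\<forall>i. j < i \<and> i < k \<longrightarrow> y i = 0")
    case True then show ?thesis using less.prems by (intro exI[of _ j] exI[of _ k]) auto
  next
    case False
    then obtain i where i: "j < i" "i < k" "y i \<noteq> 0" by auto
    show ?thesis
    proof (cases "y i > 0")
      case True
      from less.hyps[of i j] i True less.prems obtain j' k' where
        "j \<le> j' \<and> j' < k' \<and> k' \<le> i \<and> y j' < 0 \<and> y k' > 0 \<and> (\<forall>i. j' < i \<and> i < k' \<longrightarrow> y i = 0)"
        by auto
      then show ?thesis using i by (intro exI[of _ j'] exI[of _ k']) auto
    next
      case False
      with i have "y i < 0" by auto
      from less.hyps[of k i] i this less.prems obtain j' k' where
        "i \<le> j' \<and> j' < k' \<and> k' \<le> k \<and> y j' < 0 \<and> y k' > 0 \<and> (\<forall>i. j' < i \<and> i < k' \<longrightarrow> y i = 0)"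
        by auto
      then show ?thesis using i by (intro exI[of _ j'] exI[of _ k']) auto
    qed
  qed
qed

lemma propagate:
  fixes Yf :: "int \<Rightarrow> nat \<Rightarrow> real" and Wf :: "int \<Rightarrow> nat \<Rightarrow> real"
  assumes rec: "\<And>i t. Yf i (Suc t) = st (Yf i t, Wf i t) + mv (Yf (i-1) t, Wf (i-1) t)"
    and jk: "j < k" and Yj: "Yf j 0 < -a" and Yk: "Yf k 0 > a"
    and z: "\<And>i. j < i \<Longrightarrow> i < k \<Longrightarrow> Yf i 0 = 0"
    and Ws: "\<And>i t. j \<le> i \<Longrightarrow> i \<le> k \<Longrightarrow> t < nat (k-j) \<Longrightarrow> \<bar>Wf i t\<bar> < e"
    and e: "e > 0" "real (nat (k-j)) * e < a"
  shows "st (Yf k (nat(k-j)-1), Wf k (nat(k-j)-1)) > 0 \<and> mv (Yf (k-1) (nat(k-j)-1), Wf (k-1) (nat(k-j)-1)) < 0"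
proof -
  define d where "d = nat (k-j)"
  have d1: "d \<ge> 1" using jk by (simp add: d_def)
  have kd: "k = j + int d" using jk by (simp add: d_def)
  have inv: "Yf (j + int t) t \<le> -(a - real t * e) \<and> (\<forall>i. j + int t < i \<and> i < k \<longrightarrow> Yf i t = 0)
      \<and> Yf k t \<ge> a - real t * e" if "t < d" for t
    using that
  proof (induction t)
    case 0 then show ?case using Yj Yk z by auto
  next
    case (Suc t)
    then have IH: "Yf (j + int t) t \<le> -(a - real t * e)" "\<And>i. j + int t < i \<Longrightarrow> i < k \<Longrightarrow> Yf i t = 0"
      "Yf k t \<ge> a - real t * e" by auto
    have tt: "Suc t < d" by fact
    have be: "e \<le> a - real t * e"
    proof -
      have "real (Suc t) * e \<le> real d * e" using tt e by (intro mult_right_mono) auto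
      then show ?thesis using e(2) unfolding d_def[symmetric] by (simp add: algebra_simps)
    qed
    have w1: "\<bar>Wf (j + int t) t\<bar> < e" using Ws[of "j + int t" t] tt kd unfolding d_def[symmetric] by auto
    have w2: "\<bar>Wf k t\<bar> < e" using Ws[of k t] tt jk unfolding d_def[symmetric] by auto
    have A: "Yf (j + int (Suc t)) (Suc t) \<le> -(a - real (Suc t) * e)"
    proof -
      have "Yf (j + int (Suc t)) (Suc t) = st (Yf (j + int (Suc t)) t, Wf (j + int (Suc t)) t) + mv (Yf (j + int t) t, Wf (j + int t) t)"
        using rec[of "j + int (Suc t)" t] by simp
      also have "Yf (j + int (Suc t)) t = 0" using IH(2)[of "j + int (Suc t)"] tt kd by auto
      finally show ?thesis using mv_neg[OF IH(1) w1 be] by (simp add: st_zero algebra_simps)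
    qed
    have B: "Yf i (Suc t) = 0" if "j + int (Suc t) < i" "i < k" for i
      using rec[of i t] IH(2)[of i] IH(2)[of "i-1"] that by (simp add: st_zero)
    have C: "Yf k (Suc t) \<ge> a - real (Suc t) * e"
    proof -
      have "Yf (k-1) t = 0" using IH(2)[of "k-1"] tt kd by auto
      then have "Yf k (Suc t) = st (Yf k t, Wf k t)" using rec[of k t] by (simp add: st_zero)
      then show ?thesis using st_pos[OF IH(3) w2 be] by (simp add: algebra_simps)
    qed
    show ?case using A B C by blast
  qed
  obtain t where t: "d = Suc t" using d1 by (cases d) auto
  from inv[of t] t have I: "Yf (k-1) t \<le> -(a - real t * e)" "Yf k t \<ge> a - real t * e"
    using kd by (auto simp: algebra_simps)
  have be: "e < a - real t * e" using e(2) t unfolding d_def[symmetric] by (simp add: algebra_simps)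
  have w1: "\<bar>Wf (k-1) t\<bar> < e" using Ws[of "k-1" t] t kd unfolding d_def[symmetric] by auto
  have w2: "\<bar>Wf k t\<bar> < e" using Ws[of k t] t jk unfolding d_def[symmetric] by auto
  have "mv (Yf (k-1) t, Wf (k-1) t) < 0" using mv_neg[OF I(1) w1] be by force
  moreover have "st (Yf k t, Wf k t) > 0" using st_pos[OF I(2) w2] be by force
  ultimately show ?thesis using t unfolding d_def[symmetric] by simp
qed

theorem proposition3p10:
  fixes M :: "'a measure"
    and W :: "int \<Rightarrow> int \<Rightarrow> 'a \<Rightarrow> real"
    and Y :: "int \<Rightarrow> nat \<Rightarrow> 'a \<Rightarrow> real"
    and lam :: "real measure"
    and mu :: "(int \<Rightarrow> real) measure"
  assumes P: "prob_space M"
    and W_indep: "prob_space.indep_vars M (\<lambda>_. borel) (\<lambda>p. W (fst p) (snd p)) UNIV"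
    and W_law: "\<And>i t. distr M borel (W i t) = lam"
    and supp: "(0::real) \<in> measure_support lam"
    and Y0_meas: "\<And>i. Y i 0 \<in> borel_measurable M"
    and Y0_law: "distr M (PiM UNIV (\<lambda>_. borel)) (\<lambda>\<omega> i. Y i 0 \<omega>) = mu"
    and Y0_indep: "prob_space.indep_set M
          {(\<lambda>\<omega> i. Y i 0 \<omega>) -` A \<inter> space M | A.
             A \<in> sets (PiM (UNIV :: int set) (\<lambda>_. borel :: real measure))}
          {(\<lambda>\<omega> p. W (fst p) (snd p) \<omega>) -` B \<inter> space M | B.
             B \<in> sets (PiM (UNIV :: (int \<times> int) set) (\<lambda>_. borel :: real measure))}"
    and rec: "\<And>i t \<omega>. \<omega> \<in> space M \<Longrightarrow>
          Y i (Suc t) \<omega> = sjr_update (\<lambda>j. Y j t \<omega>) (\<lambda>j. W j (int t) \<omega>) i"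
    and invariant: "\<And>t. distr M (PiM UNIV (\<lambda>_. borel)) (\<lambda>\<omega> i. Y i t \<omega>) = mu"
    and integrable: "integrable M (Y 0 0)"
    and erg_i: "stationary_ergodic
          (distr M (PiM (UNIV :: (int \<times> nat) set) (\<lambda>_. borel :: (real \<times> real) measure))
             (\<lambda>\<omega> (i, t). (Y i t \<omega>, W i (int t) \<omega>))) shift_i"
    and erg_t: "stationary_ergodic
          (distr M (PiM (UNIV :: (int \<times> nat) set) (\<lambda>_. borel :: (real \<times> real) measure))
             (\<lambda>\<omega> (i, t). (Y i t \<omega>, W i (int t) \<omega>))) shift_t"
  shows "(AE \<omega> in M. 0 \<le> Y 0 0 \<omega>) \<or> (AE \<omega> in M. Y 0 0 \<omega> \<le> 0)"

proof -
  interpret prob_space M by (rule P)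
  have Wm[measurable]: "W i t \<in> borel_measurable M" for i t
    using W_indep unfolding indep_vars_def by auto
  have Ym[measurable]: "Y i t \<in> borel_measurable M" for i t
  proof (induction t arbitrary: i)
    case 0 then show ?case by (rule Y0_meas)
  next
    case (Suc t)
    have [measurable]: "Y i t \<in> borel_measurable M" for i by fact
    have "(\<lambda>\<omega>. Y i (Suc t) \<omega>) \<in> borel_measurable M \<longleftrightarrow>
      (\<lambda>\<omega>. st (Y i t \<omega>, W i (int t) \<omega>) + mv (Y (i-1) t \<omega>, W (i-1) (int t) \<omega>)) \<in> borel_measurable M"
      by (rule measurable_cong) (simp add: rec sjr_split)
    moreover have "(\<lambda>\<omega>. st (Y i t \<omega>, W i (int t) \<omega>) + mv (Y (i-1) t \<omega>, W (i-1) (int t) \<omega>)) \<in> borel_measurable M"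
      by measurable
    ultimately show ?case by simp
  qed
  define X where "X = (\<lambda>\<omega> (i::int, t::nat). (Y i t \<omega>, W i (int t) \<omega>))"
  define Q where "Q = distr M (PiM (UNIV :: (int \<times> nat) set) (\<lambda>_. borel :: (real \<times> real) measure)) X"
  have Zm[measurable]: "(\<lambda>\<omega>. (Y i t \<omega>, W i (int t) \<omega>)) \<in> M \<rightarrow>\<^sub>M (borel :: (real \<times> real) measure)" for i t
    unfolding borel_prod[symmetric] by measurable
  have Xm[measurable]: "X \<in> M \<rightarrow>\<^sub>M PiM (UNIV :: (int \<times> nat) set) (\<lambda>_. borel :: (real \<times> real) measure)"
  proof -
    have "X = (\<lambda>\<omega> p. (\<lambda>p \<omega>. (Y (fst p) (snd p) \<omega>, W (fst p) (int (snd p)) \<omega>)) p \<omega>)"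
      by (auto simp: X_def fun_eq_iff split: prod.split)
    also have "\<dots> \<in> M \<rightarrow>\<^sub>M PiM (UNIV :: (int \<times> nat) set) (\<lambda>_. borel :: (real \<times> real) measure)"
      by (rule measurable_PiM_single') (auto)
    finally show ?thesis .
  qed
  have spQ: "space Q = UNIV" by (simp add: Q_def space_PiM)
  have setsQ: "sets Q = sets (PiM (UNIV :: (int \<times> nat) set) (\<lambda>_. borel :: (real \<times> real) measure))"
    by (simp add: Q_def)
  have erg_i': "stationary_ergodic Q shift_i" using erg_i unfolding Q_def X_def .
  have erg_t': "stationary_ergodic Q shift_t" using erg_t unfolding Q_def X_def .
  have shi[measurable]: "shift_i \<in> Q \<rightarrow>\<^sub>M Q" and shi_eq: "distr Q Q shift_i = Q"
    and shi_erg: "\<And>A. A \<in> sets Q \<Longrightarrow> shift_i -` A \<inter> space Q = A \<Longrightarrow> emeasure Q A = 0 \<or> emeasure Q A = 1"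
    using erg_i' unfolding stationary_ergodic_def by auto
  have sht[measurable]: "shift_t \<in> Q \<rightarrow>\<^sub>M Q" and sht_eq: "distr Q Q shift_t = Q"
    using erg_t' unfolding stationary_ergodic_def by auto
  have projm[measurable]: "(\<lambda>f. f p) \<in> Q \<rightarrow>\<^sub>M (borel :: (real \<times> real) measure)" for p
    unfolding Q_def by (simp add: measurable_distr_eq1)
  define L where "L i t = distr Q borel (\<lambda>f. f (i, t))" for i t
  have L_Z: "distr M borel (\<lambda>\<omega>. (Y i t \<omega>, W i (int t) \<omega>)) = L i t" for i t
  proof -
    have "L i t = distr M borel ((\<lambda>f. f (i, t)) \<circ> X)"
      unfolding L_def Q_def by (rule distr_distr[OF measurable_component_singleton Xm]) simp
    also have "(\<lambda>f. f (i, t)) \<circ> X = (\<lambda>\<omega>. (Y i t \<omega>, W i (int t) \<omega>))" by (auto simp: X_def)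
    finally show ?thesis by simp
  qed
  have L_i: "L (i + 1) t = L i t" for i t
  proof -
    have "L i t = distr (distr Q Q shift_i) borel (\<lambda>f. f (i, t))" unfolding L_def shi_eq ..
    also have "\<dots> = distr Q borel ((\<lambda>f. f (i, t)) \<circ> shift_i)" by (rule distr_distr[OF projm shi])
    also have "(\<lambda>f. f (i, t)) \<circ> shift_i = (\<lambda>f. f (i + 1, t))" by (auto simp: shift_i_def)
    finally show ?thesis unfolding L_def by simp
  qed
  have L_t: "L i (Suc t) = L i t" for i t
  proof -
    have "L i t = distr (distr Q Q shift_t) borel (\<lambda>f. f (i, t))" unfolding L_def sht_eq ..
    also have "\<dots> = distr Q borel ((\<lambda>f. f (i, t)) \<circ> shift_t)" by (rule distr_distr[OF projm sht])
    also have "(\<lambda>f. f (i, t)) \<circ> shift_t = (\<lambda>f. f (i, Suc t))" by (auto simp: shift_t_def)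
    finally show ?thesis unfolding L_def by simp
  qed
  have L_0: "L i t = L 0 0" for i t
  proof -
    have "L i t = L 0 t"
    proof (induction i rule: int_induct[where k=0])
      case base then show ?case by simp
    next
      case (step1 i) then show ?case using L_i[of i t] by simp
    next
      case (step2 i) then show ?case using L_i[of "i - 1" t] by simp
    qed
    also have "\<dots> = L 0 0" by (induction t) (auto simp: L_t)
    finally show ?thesis .
  qed
  have law: "distr M borel (\<lambda>\<omega>. (Y i t \<omega>, W i (int t) \<omega>)) = distr M borel (\<lambda>\<omega>. (Y 0 0 \<omega>, W 0 0 \<omega>))" for i t
    using L_Z[of i t] L_Z[of 0 0] L_0[of i t] by simp
  have int_eq: "integral\<^sup>L M (\<lambda>\<omega>. g (Y i t \<omega>, W i (int t) \<omega>)) = integral\<^sup>L M (\<lambda>\<omega>. g (Y 0 0 \<omega>, W 0 0 \<omega>))"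
    if g[measurable]: "g \<in> borel_measurable (borel :: (real \<times> real) measure)" for g :: "real \<times> real \<Rightarrow> real" and i t
  proof -
    have "integral\<^sup>L M (\<lambda>\<omega>. g (Y i t \<omega>, W i (int t) \<omega>)) = integral\<^sup>L (distr M borel (\<lambda>\<omega>. (Y i t \<omega>, W i (int t) \<omega>))) g"
      by (rule integral_distr[symmetric]) auto
    also have "\<dots> = integral\<^sup>L (distr M borel (\<lambda>\<omega>. (Y 0 0 \<omega>, W 0 0 \<omega>))) g" by (simp only: law)
    also have "\<dots> = integral\<^sup>L M (\<lambda>\<omega>. g (Y 0 0 \<omega>, W 0 0 \<omega>))"
      using integral_distr[OF Zm[of 0 0] g] by simp
    finally show ?thesis .
  qed
  have intble: "integrable M (\<lambda>\<omega>. g (Y i t \<omega>, W i (int t) \<omega>))"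
    if g[measurable]: "g \<in> borel_measurable (borel :: (real \<times> real) measure)" and gb: "\<And>p. \<bar>g p\<bar> \<le> \<bar>fst p\<bar>"
    for g :: "real \<times> real \<Rightarrow> real" and i t
  proof -
    have "integrable M (\<lambda>\<omega>. g (Y 0 0 \<omega>, W 0 0 \<omega>))"
      by (rule Bochner_Integration.integrable_bound[OF integrable]) (use gb in auto)
    then have "integrable (distr M borel (\<lambda>\<omega>. (Y 0 0 \<omega>, W 0 0 \<omega>))) g"
      using integrable_distr_eq[OF Zm[of 0 0] g] by simp
    then have "integrable (distr M borel (\<lambda>\<omega>. (Y i t \<omega>, W i (int t) \<omega>))) g" by (simp only: law)
    then show ?thesis using integrable_distr_eq[OF Zm[of i t] g] by simp
  qed

  have absm[measurable]: "(\<lambda>p. \<bar>st p\<bar>) \<in> borel_measurable borel" "(\<lambda>p. \<bar>mv p\<bar>) \<in> borel_measurable borel"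
    "(\<lambda>p::real \<times> real. \<bar>fst p\<bar>) \<in> borel_measurable borel"
    unfolding st_def mv_def pos_part_def neg_part_def
    by (intro borel_measurable_continuous_onI continuous_intros)+
  have NC1: "AE \<omega> in M. \<bar>st (Y i t \<omega>, W i (int t) \<omega>)\<bar> + \<bar>mv (Y (i-1) t \<omega>, W (i-1) (int t) \<omega>)\<bar>
      = \<bar>st (Y i t \<omega>, W i (int t) \<omega>) + mv (Y (i-1) t \<omega>, W (i-1) (int t) \<omega>)\<bar>" for i t
  proof -
    define F where "F \<omega> = \<bar>st (Y i t \<omega>, W i (int t) \<omega>)\<bar> + \<bar>mv (Y (i-1) t \<omega>, W (i-1) (int t) \<omega>)\<bar> - \<bar>Y i (Suc t) \<omega>\<bar>" for \<omega>
    have i1: "integrable M (\<lambda>\<omega>. \<bar>st (Y i t \<omega>, W i (int t) \<omega>)\<bar>)"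
      by (rule intble[OF absm(1)]) (simp add: st_bound)
    have i2: "integrable M (\<lambda>\<omega>. \<bar>mv (Y (i-1) t \<omega>, W (i-1) (int t) \<omega>)\<bar>)"
      by (rule intble[OF absm(2)]) (simp add: st_bound)
    have i3: "integrable M (\<lambda>\<omega>. \<bar>Y i (Suc t) \<omega>\<bar>)"
      using intble[OF absm(3), of i "Suc t"] by simp
    have e1: "integral\<^sup>L M (\<lambda>\<omega>. \<bar>st (Y i t \<omega>, W i (int t) \<omega>)\<bar>) = integral\<^sup>L M (\<lambda>\<omega>. \<bar>st (Y 0 0 \<omega>, W 0 0 \<omega>)\<bar>)"
      using int_eq[OF absm(1)] by simp
    have e2: "integral\<^sup>L M (\<lambda>\<omega>. \<bar>mv (Y (i-1) t \<omega>, W (i-1) (int t) \<omega>)\<bar>) = integral\<^sup>L M (\<lambda>\<omega>. \<bar>mv (Y 0 0 \<omega>, W 0 0 \<omega>)\<bar>)"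
      using int_eq[OF absm(2)] by simp
    have e3: "integral\<^sup>L M (\<lambda>\<omega>. \<bar>Y i (Suc t) \<omega>\<bar>) = integral\<^sup>L M (\<lambda>\<omega>. \<bar>Y 0 0 \<omega>\<bar>)"
      using int_eq[OF absm(3), of i "Suc t"] by simp
    have j1: "integrable M (\<lambda>\<omega>. \<bar>st (Y 0 0 \<omega>, W 0 0 \<omega>)\<bar>)" using intble[OF absm(1), of 0 0] by (simp add: st_bound)
    have j2: "integrable M (\<lambda>\<omega>. \<bar>mv (Y 0 0 \<omega>, W 0 0 \<omega>)\<bar>)" using intble[OF absm(2), of 0 0] by (simp add: st_bound)
    have e4: "integral\<^sup>L M (\<lambda>\<omega>. \<bar>st (Y 0 0 \<omega>, W 0 0 \<omega>)\<bar>) + integral\<^sup>L M (\<lambda>\<omega>. \<bar>mv (Y 0 0 \<omega>, W 0 0 \<omega>)\<bar>)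
        = integral\<^sup>L M (\<lambda>\<omega>. \<bar>Y 0 0 \<omega>\<bar>)"
      using Bochner_Integration.integral_add[OF j1 j2, symmetric] st_mv_abs by simp
    have Fi: "integrable M F" unfolding F_def using i1 i2 i3 by auto
    have "integral\<^sup>L M F = 0"
      unfolding F_def using i1 i2 i3 e1 e2 e3 e4 by (simp add: Bochner_Integration.integral_diff Bochner_Integration.integral_add)
    moreover have Fnn: "\<omega> \<in> space M \<Longrightarrow> 0 \<le> F \<omega>" for \<omega>
      unfolding F_def by (simp add: rec sjr_split abs_triangle_ineq)
    ultimately have "AE \<omega> in M. F \<omega> = 0"
      using integral_nonneg_eq_0_iff_AE[OF Fi] by (auto intro: AE_I2)
    then show ?thesis
      by (rule AE_mp) (auto intro!: AE_I2 simp: F_def rec sjr_split)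
  qed
  have NC: "AE \<omega> in M. \<forall>i t. \<bar>st (Y i t \<omega>, W i (int t) \<omega>)\<bar> + \<bar>mv (Y (i-1) t \<omega>, W (i-1) (int t) \<omega>)\<bar>
      = \<bar>st (Y i t \<omega>, W i (int t) \<omega>) + mv (Y (i-1) t \<omega>, W (i-1) (int t) \<omega>)\<bar>"
    using NC1 by (simp add: AE_all_countable)

  show ?thesis
  proof (rule ccontr)
    assume H: "\<not> ((AE \<omega> in M. 0 \<le> Y 0 0 \<omega>) \<or> (AE \<omega> in M. Y 0 0 \<omega> \<le> 0))"
    have Qp: "prob_space Q" unfolding Q_def by (rule prob_space_distr[OF Xm])
    have fstm[measurable]: "(fst :: real \<times> real \<Rightarrow> real) \<in> borel_measurable borel"
      unfolding borel_prod[symmetric] by measurable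
    have EQ: "emeasure Q {f \<in> space Q. P (fst (f (0, 0)))} = emeasure M {\<omega> \<in> space M. P (Y 0 0 \<omega>)}"
      if [measurable]: "Measurable.pred borel P" for P :: "real \<Rightarrow> bool"
    proof -
      have "{f \<in> space Q. P (fst (f (0, 0)))} \<in> sets (PiM (UNIV :: (int \<times> nat) set) (\<lambda>_. borel :: (real \<times> real) measure))"
        unfolding setsQ[symmetric] by measurable
      then have "emeasure Q {f \<in> space Q. P (fst (f (0, 0)))} = emeasure M (X -` {f \<in> space Q. P (fst (f (0, 0)))} \<inter> space M)"
        unfolding Q_def by (rule emeasure_distr[OF Xm])
      also have "X -` {f \<in> space Q. P (fst (f (0, 0)))} \<inter> space M = {\<omega> \<in> space M. P (Y 0 0 \<omega>)}"
        by (auto simp: X_def spQ)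
      finally show ?thesis .
    qed
    text \<open>Ergodic argument: a.s. there are positive values arbitrarily far right and a negative value.\<close>
    have Yf_m[measurable]: "(\<lambda>f. fst (f (k, 0))) \<in> borel_measurable Q" for k :: int
      by measurable
    have Q_pre: "emeasure Q (shift_i -` S \<inter> space Q) = emeasure Q S" if "S \<in> sets Q" for S
      using emeasure_distr[OF shi that] shi_eq by simp
    have erg1: "emeasure Q S = 1" if S: "S \<in> sets Q" "shift_i -` S \<inter> space Q = S" "emeasure Q S \<noteq> 0" for S
      using shi_erg[OF S(1,2)] S(3) by auto
    have toM: "AE \<omega> in M. X \<omega> \<in> S" if "S \<in> sets Q" "emeasure Q S = 1" for S
    proof -
      have "AE f in Q. f \<in> S"
        using prob_space.prob_eq_1[OF Qp that(1)] that(2) by (simp add: measure_def)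
      moreover have "{x \<in> space (PiM (UNIV :: (int \<times> nat) set) (\<lambda>_. borel :: (real \<times> real) measure)). x \<in> S}
          \<in> sets (PiM (UNIV :: (int \<times> nat) set) (\<lambda>_. borel :: (real \<times> real) measure))"
        using that(1) unfolding setsQ by (simp add: space_PiM)
      ultimately show ?thesis unfolding Q_def by (subst (asm) AE_distr_iff[OF Xm]) auto
    qed
    define U where "U n = {f \<in> space Q. \<exists>k\<ge>n. 0 < fst (f (k, 0))}" for n :: int
    have Um[measurable]: "U n \<in> sets Q" for n unfolding U_def by measurable
    have U_sh: "shift_i -` U n \<inter> space Q = U (n + 1)" for n
    proof -
      have "(\<exists>k\<ge>n. 0 < fst (f (k + 1, 0))) \<longleftrightarrow> (\<exists>k\<ge>n + 1. 0 < fst (f (k, 0)))" for f :: "int \<times> nat \<Rightarrow> real \<times> real"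
      proof
        assume "\<exists>k\<ge>n. 0 < fst (f (k + 1, 0))"
        then obtain k where "k \<ge> n" "0 < fst (f (k + 1, 0))" by blast
        then show "\<exists>k\<ge>n + 1. 0 < fst (f (k, 0))" by (intro exI[of _ "k + 1"]) auto
      next
        assume "\<exists>k\<ge>n + 1. 0 < fst (f (k, 0))"
        then obtain k where "k \<ge> n + 1" "0 < fst (f (k, 0))" by blast
        then show "\<exists>k\<ge>n. 0 < fst (f (k + 1, 0))" by (intro exI[of _ "k - 1"]) auto
      qed
      then show ?thesis by (auto simp: U_def shift_i_def spQ)
    qed
    have U_eq: "emeasure Q (U (n + 1)) = emeasure Q (U n)" for n
      using Q_pre[OF Um[of n]] U_sh[of n] by simp
    have U_c: "emeasure Q (U n) = emeasure Q (U 0)" for n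
    proof (induction n rule: int_induct[where k=0])
      case base then show ?case by simp
    next
      case (step1 i) then show ?case using U_eq[of i] by simp
    next
      case (step2 i) then show ?case using U_eq[of "i - 1"] by simp
    qed
    define A where "A = {f \<in> space Q. \<exists>k. 0 < fst (f (k, 0))}"
    have Am: "A \<in> sets Q" unfolding A_def by measurable
    have A_sh: "shift_i -` A \<inter> space Q = A"
    proof -
      have "(\<exists>k. 0 < fst (f (k + 1, 0))) \<longleftrightarrow> (\<exists>k. 0 < fst (f (k, 0)))" for f :: "int \<times> nat \<Rightarrow> real \<times> real"
      proof
        assume "\<exists>k. 0 < fst (f (k + 1, 0))" then show "\<exists>k. 0 < fst (f (k, 0))" by blast
      next
        assume "\<exists>k. 0 < fst (f (k, 0))"
        then obtain k where "0 < fst (f (k, 0))" by blast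
        then show "\<exists>k. 0 < fst (f (k + 1, 0))" by (intro exI[of _ "k - 1"]) simp
      qed
      then show ?thesis by (auto simp: A_def shift_i_def spQ)
    qed
    have "emeasure M {\<omega> \<in> space M. 0 < Y 0 0 \<omega>} \<noteq> 0"
    proof
      assume "emeasure M {\<omega> \<in> space M. 0 < Y 0 0 \<omega>} = 0"
      moreover have "{\<omega> \<in> space M. \<not> (Y 0 0 \<omega> \<le> 0)} = {\<omega> \<in> space M. 0 < Y 0 0 \<omega>}" by auto
      moreover have "{\<omega> \<in> space M. 0 < Y 0 0 \<omega>} \<in> sets M" by measurable
      ultimately have "AE \<omega> in M. Y 0 0 \<omega> \<le> 0"
        using AE_iff_measurable[of "{\<omega> \<in> space M. 0 < Y 0 0 \<omega>}" M "\<lambda>\<omega>. Y 0 0 \<omega> \<le> 0"] by simp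
      then show False using H by simp
    qed
    then have "emeasure Q {f \<in> space Q. 0 < fst (f (0, 0))} \<noteq> 0"
      using EQ[of "\<lambda>x. 0 < x"] by simp
    moreover have "emeasure Q {f \<in> space Q. 0 < fst (f (0, 0))} \<le> emeasure Q A"
      by (rule emeasure_mono) (auto simp: A_def Am)
    ultimately have "emeasure Q A \<noteq> 0"
      by (intro notI) (simp del: space_PiM)
    then have A1: "emeasure Q A = 1" using erg1[OF Am A_sh] by simp
    have "A = (\<Union>m. U (- int m))"
    proof (intro equalityI subsetI)
      fix f assume "f \<in> A"
      then obtain k where "f \<in> space Q" "0 < fst (f (k, 0))" by (auto simp: A_def)
      then have "f \<in> U (- int (nat (- k)))" unfolding U_def by (intro CollectI conjI exI[of _ k]) auto
      then show "f \<in> (\<Union>m. U (- int m))" by blast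
    next
      fix f assume "f \<in> (\<Union>m. U (- int m))"
      then show "f \<in> A" unfolding A_def U_def by blast
    qed
    moreover have "incseq (\<lambda>m. U (- int m))"
    proof (rule incseq_SucI, rule subsetI)
      fix m f assume "f \<in> U (- int m)"
      then obtain k where "f \<in> space Q" "k \<ge> - int m" "0 < fst (f (k, 0))" by (auto simp: U_def)
      then show "f \<in> U (- int (Suc m))" unfolding U_def by (intro CollectI conjI exI[of _ k]) auto
    qed
    moreover have "range (\<lambda>m. U (- int m)) \<subseteq> sets Q" using Um by blast
    ultimately have "(SUP m. emeasure Q (U (- int m))) = emeasure Q A"
      using SUP_emeasure_incseq[of "\<lambda>m. U (- int m)" Q] by simp
    moreover have Ueq: "(\<lambda>m. emeasure Q (U (- int m))) = (\<lambda>m. emeasure Q (U 0))" by (rule ext) (rule U_c)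
    ultimately have "(SUP m::nat. emeasure Q (U 0)) = 1" using A1 by (simp only: Ueq)
    then have "emeasure Q (U 0) = 1" by simp
    then have AU: "AE \<omega> in M. X \<omega> \<in> U n" for n using U_c[of n] toM[OF Um[of n]] by simp
    define B where "B = {f \<in> space Q. \<exists>k. fst (f (k, 0)) < 0}"
    have Bm: "B \<in> sets Q" unfolding B_def by measurable
    have B_sh: "shift_i -` B \<inter> space Q = B"
    proof -
      have "(\<exists>k. fst (f (k + 1, 0)) < 0) \<longleftrightarrow> (\<exists>k. fst (f (k, 0)) < 0)" for f :: "int \<times> nat \<Rightarrow> real \<times> real"
      proof
        assume "\<exists>k. fst (f (k + 1, 0)) < 0" then show "\<exists>k. fst (f (k, 0)) < 0" by blast
      next
        assume "\<exists>k. fst (f (k, 0)) < 0"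
        then obtain k where "fst (f (k, 0)) < 0" by blast
        then show "\<exists>k. fst (f (k + 1, 0)) < 0" by (intro exI[of _ "k - 1"]) simp
      qed
      then show ?thesis by (auto simp: B_def shift_i_def spQ)
    qed
    have "emeasure M {\<omega> \<in> space M. Y 0 0 \<omega> < 0} \<noteq> 0"
    proof
      assume "emeasure M {\<omega> \<in> space M. Y 0 0 \<omega> < 0} = 0"
      moreover have "{\<omega> \<in> space M. \<not> (0 \<le> Y 0 0 \<omega>)} = {\<omega> \<in> space M. Y 0 0 \<omega> < 0}" by auto
      moreover have "{\<omega> \<in> space M. Y 0 0 \<omega> < 0} \<in> sets M" by measurable
      ultimately have "AE \<omega> in M. 0 \<le> Y 0 0 \<omega>"
        using AE_iff_measurable[of "{\<omega> \<in> space M. Y 0 0 \<omega> < 0}" M "\<lambda>\<omega>. 0 \<le> Y 0 0 \<omega>"] by simp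
      then show False using H by simp
    qed
    then have "emeasure Q {f \<in> space Q. fst (f (0, 0)) < 0} \<noteq> 0"
      using EQ[of "\<lambda>x. x < 0"] by simp
    moreover have "emeasure Q {f \<in> space Q. fst (f (0, 0)) < 0} \<le> emeasure Q B"
      by (rule emeasure_mono) (auto simp: B_def Bm)
    ultimately have "emeasure Q B \<noteq> 0"
      by (intro notI) (simp del: space_PiM)
    then have "emeasure Q B = 1" using erg1[OF Bm B_sh] by simp
    then have AB: "AE \<omega> in M. X \<omega> \<in> B" using toM[OF Bm] by simp
    have "AE \<omega> in M. \<forall>n. X \<omega> \<in> U n" using AU by (simp add: AE_all_countable)
    with AB have ergo: "AE \<omega> in M. (\<forall>n. \<exists>k\<ge>n. 0 < Y k 0 \<omega>) \<and> (\<exists>j. Y j 0 \<omega> < 0)"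
      by eventually_elim (auto simp: U_def B_def X_def)
    define E0 where "E0 j k n \<omega> = (Y j 0 \<omega> < - inverse (real (Suc n)) \<and> (\<forall>i. j < i \<and> i < k \<longrightarrow> Y i 0 \<omega> = 0)
        \<and> inverse (real (Suc n)) < Y k 0 \<omega>)" for j k :: int and n :: nat and \<omega>
    have "\<exists>j k n. j < k \<and> \<not> (AE \<omega> in M. \<not> E0 j k n \<omega>)"
    proof (rule ccontr)
      assume "\<not> ?thesis"
      then have "\<forall>j k n. AE \<omega> in M. j < k \<longrightarrow> \<not> E0 j k n \<omega>" by auto
      then have "AE \<omega> in M. \<forall>j k n. j < k \<longrightarrow> \<not> E0 j k n \<omega>" by (simp add: AE_all_countable)
      with ergo have "AE \<omega> in M. False"
      proof eventually_elim
        case (elim \<omega>)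
        then obtain j where j: "Y j 0 \<omega> < 0" by auto
        from elim obtain k where k: "k \<ge> j + 1" "0 < Y k 0 \<omega>" by blast
        obtain j' k' where jk: "j \<le> j'" "j' < k'" "k' \<le> k" "Y j' 0 \<omega> < 0" "Y k' 0 \<omega> > 0"
          "\<forall>i. j' < i \<and> i < k' \<longrightarrow> Y i 0 \<omega> = 0"
          using nearest_pair[of j k "\<lambda>i. Y i 0 \<omega>"] j k by auto
        obtain m where m: "m > 0" "inverse (real m) < min (- Y j' 0 \<omega>) (Y k' 0 \<omega>)"
          using ex_inverse_of_nat_less[of "min (- Y j' 0 \<omega>) (Y k' 0 \<omega>)"] jk by auto
        then obtain n where "m = Suc n" by (cases m) auto
        with m jk have "E0 j' k' n \<omega>" unfolding E0_def by auto
        with elim jk show False by auto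
      qed
      then show False using AE_False by simp
    qed
    then obtain j k n where jk: "j < k" and nAE: "\<not> (AE \<omega> in M. \<not> E0 j k n \<omega>)" by blast
    define d where "d = nat (k - j)"
    define a where "a = inverse (real (Suc n))"
    define e where "e = a / (real d + 1)"
    have apos: "a > 0" by (simp add: a_def)
    have epos: "e > 0" using apos by (simp add: e_def)
    have de: "real d * e < a"
    proof -
      have "real d * e = a * (real d / (real d + 1))" by (simp add: e_def)
      also have "\<dots> < a * 1" using apos by (intro mult_strict_left_mono) auto
      finally show ?thesis by simp
    qed
    have d1: "d \<ge> 1" using jk by (simp add: d_def)
    define S where "S = {-e<..<e}"
    have Sm[measurable]: "S \<in> sets borel" by (simp add: S_def)
    define J where "J = {j..k} \<times> {0..<int d}"
    have Jfin: "finite J" "J \<noteq> {}" using jk d1 by (auto simp: J_def)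
    define E0s where "E0s = {\<omega> \<in> space M. E0 j k n \<omega>}"
    define EWs where "EWs = {\<omega> \<in> space M. \<forall>p\<in>J. W (fst p) (snd p) \<omega> \<in> S}"
    have E0m: "E0s \<in> sets M" unfolding E0s_def E0_def by measurable
    have EWm: "EWs \<in> sets M" unfolding EWs_def using Jfin by measurable
    have pE0: "prob E0s > 0"
    proof -
      have "{\<omega> \<in> space M. \<not> \<not> E0 j k n \<omega>} = E0s" by (simp add: E0s_def)
      then have "emeasure M E0s \<noteq> 0" using nAE AE_iff_measurable[OF E0m, of "\<lambda>\<omega>. \<not> E0 j k n \<omega>"] by auto
      then have "prob E0s \<noteq> 0" by (simp add: emeasure_eq_measure)
      with measure_nonneg[of M E0s] show ?thesis by linarith
    qed
    have pW: "prob (W i t -` S \<inter> space M) > 0" for i t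
    proof -
      have "0 \<in> S" "open S" using epos by (auto simp: S_def)
      then have "0 < emeasure lam S" using supp unfolding measure_support_def by blast
      also have "emeasure lam S = emeasure M (W i t -` S \<inter> space M)"
        unfolding W_law[of i t, symmetric] by (rule emeasure_distr[OF Wm Sm])
      finally show ?thesis by (simp add: emeasure_eq_measure)
    qed
    have "EWs = (\<Inter>p\<in>J. (\<lambda>p. W (fst p) (snd p)) p -` S \<inter> space M)"
      using Jfin by (auto simp: EWs_def)
    then have "prob EWs = (\<Prod>p\<in>J. prob ((\<lambda>p. W (fst p) (snd p)) p -` S \<inter> space M))"
      using indep_varsD[OF W_indep Jfin(2) Jfin(1) subset_UNIV, of "\<lambda>_. S"] by simp
    then have pEW: "prob EWs > 0" using pW by (simp add: prod_pos)
    have "prob (E0s \<inter> EWs) = prob E0s * prob EWs"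
    proof (rule indep_setD[OF Y0_indep])
      define A0 where "A0 = {g \<in> space (PiM (UNIV :: int set) (\<lambda>_. borel :: real measure)).
        g j < - a \<and> (\<forall>i. j < i \<and> i < k \<longrightarrow> g i = 0) \<and> a < g k}"
      have "A0 \<in> sets (PiM (UNIV :: int set) (\<lambda>_. borel :: real measure))" unfolding A0_def by measurable
      moreover have "E0s = (\<lambda>\<omega> i. Y i 0 \<omega>) -` A0 \<inter> space M"
        by (auto simp: E0s_def E0_def A0_def space_PiM a_def)
      ultimately show "E0s \<in> {(\<lambda>\<omega> i. Y i 0 \<omega>) -` A \<inter> space M | A.
             A \<in> sets (PiM (UNIV :: int set) (\<lambda>_. borel :: real measure))}" by blast
    next
      define B0 where "B0 = {h \<in> space (PiM (UNIV :: (int \<times> int) set) (\<lambda>_. borel :: real measure)).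
        \<forall>p\<in>J. h p \<in> S}"
      have "B0 \<in> sets (PiM (UNIV :: (int \<times> int) set) (\<lambda>_. borel :: real measure))"
        unfolding B0_def using Jfin by measurable
      moreover have "EWs = (\<lambda>\<omega> p. W (fst p) (snd p) \<omega>) -` B0 \<inter> space M"
        by (auto simp: EWs_def B0_def space_PiM)
      ultimately show "EWs \<in> {(\<lambda>\<omega> p. W (fst p) (snd p) \<omega>) -` B \<inter> space M | B.
             B \<in> sets (PiM (UNIV :: (int \<times> int) set) (\<lambda>_. borel :: real measure))}" by blast
    qed
    then have ppos: "prob (E0s \<inter> EWs) > 0" using pE0 pEW by simp
    have "AE \<omega> in M. \<omega> \<notin> E0s \<inter> EWs"
      using NC
    proof eventually_elim
      case (elim \<omega>)
      show ?case
      proof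
        assume om: "\<omega> \<in> E0s \<inter> EWs"
        then have sp: "\<omega> \<in> space M" by (simp add: E0s_def)
        from om have E: "E0 j k n \<omega>" by (simp add: E0s_def)
        have Ws: "\<bar>W i (int t) \<omega>\<bar> < e" if "j \<le> i" "i \<le> k" "t < nat (k - j)" for i t
        proof -
          have "(i, int t) \<in> J" using that by (simp add: J_def d_def)
          then have "W i (int t) \<omega> \<in> S" using om by (auto simp: EWs_def)
          then show ?thesis by (auto simp: S_def)
        qed
        have "st (Y k (nat (k-j) - 1) \<omega>, W k (int (nat (k-j) - 1)) \<omega>) > 0 \<and>
            mv (Y (k-1) (nat (k-j) - 1) \<omega>, W (k-1) (int (nat (k-j) - 1)) \<omega>) < 0"
        proof (rule propagate[of "\<lambda>i t. Y i t \<omega>" "\<lambda>i t. W i (int t) \<omega>" j k a e])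
          show "Y i (Suc t) \<omega> = st (Y i t \<omega>, W i (int t) \<omega>) + mv (Y (i - 1) t \<omega>, W (i - 1) (int t) \<omega>)" for i t
            using rec[OF sp] by (simp add: sjr_split)
        qed (use jk E Ws epos de in \<open>auto simp: E0_def a_def d_def\<close>)
        moreover have "\<bar>st (Y k (nat (k-j) - 1) \<omega>, W k (int (nat (k-j) - 1)) \<omega>)\<bar> +
            \<bar>mv (Y (k-1) (nat (k-j) - 1) \<omega>, W (k-1) (int (nat (k-j) - 1)) \<omega>)\<bar> =
            \<bar>st (Y k (nat (k-j) - 1) \<omega>, W k (int (nat (k-j) - 1)) \<omega>) +
            mv (Y (k-1) (nat (k-j) - 1) \<omega>, W (k-1) (int (nat (k-j) - 1)) \<omega>)\<bar>"
          using elim by blast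
        ultimately show False by linarith
      qed
    qed
    then have "emeasure M (E0s \<inter> EWs) = 0"
      using AE_iff_measurable[of "E0s \<inter> EWs" M "\<lambda>\<omega>. \<omega> \<notin> E0s \<inter> EWs"] E0m EWm
      by (auto simp: E0s_def)
    then show False using ppos by (simp add: emeasure_eq_measure)
  qed
qed

end
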